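(* Let $n\ge1$. The distributive skeleton functor $\mathfrak S\colon\mathsf{PMV}_n\to\mathsf{DL}$ is dual to the forgetful functor $\mathsf U\colon\mathcal X_n\to\mathsf{Priest}$. That is, there is a natural isomorphism $$D\circ\mathfrak S\cong\mathsf U\circ D_n.$$ Its component at $\mathbf A$ is the order-isomorphism and homeomorphism $$\mathsf{PMV}_n(\mathbf A,\mathbf{P\L}_n)\to\mathsf{DL}(\mathfrak S(\mathbf A),\mathbf 2),\qquad u\mapsto u|_{\mathfrak S(\mathbf A)}.$$
   Context: For $n\ge 1$, the algebra $\mathbf{P\L}_n=\langle\{0,\tfrac1n,\dots,1\},\min,\max,\odot,\oplus,0,1\rangle$ has $x\odot y=\max\{0,x+y-1\}$ and $x\oplus y=\min\{1,x+y\}$. $\mathsf{PMV}_n$ is the variety it generates. - $\mathcal S_n$ is the set of subalgebras $\mathbf R$ of $\mathbf{P\L}_n^2$ with $\{(x,y):x=0\text{ or }y=1\}\subseteq\mathbf R\subseteq\{(x,y):x\le y\}$. - $\mathcal X_n$ is the category of topological structures isomorphic to closed substructures of nonempty powers of $\langle\{0,\tfrac1n,\dots,1\},\mathcal S_n,\text{discrete}\rangle$, with continuous relation-preserving maps as morphisms. - $D_n\colon\mathsf{PMV}_n\to\mathcal X_n$ sends $\mathbf A$ to $\mathsf{PMV}_n(\mathbf A,\mathbf{P\L}_n)$ with pointwise relations and the subspace topology of the product topology. On morphisms it acts by precomposition. - $\mathsf{DL}$ is the category of bounded distributive lattices and $\mathsf{Priest}$ the category of Priestley spaces. - $D\colon\mathsf{DL}\to\mathsf{Priest}$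 is Priestley duality: $D(\mathbf L)=\mathsf{DL}(\mathbf L,\mathbf 2)$ with pointwise order and product topology, where $\mathbf 2$ is the two-element lattice. - Every $\mathbf X\in\mathcal X_n$ has an underlying Priestley space $\langle X,\le^{\mathbf X},\mathcal T\rangle$. The functor $\mathsf U$ sends $\mathbf X$ to this space and each morphism to itself. - The distributive skeleton of $\mathbf A\in\mathsf{PMV}_n$ is the bounded distributive lattice $\mathfrak S(\mathbf A)=\langle\{a\in A:a\oplus a=a\},\wedge,\vee,0,1\rangle$. On a homomorphism $h$, $\mathfrak S h=h|_{\mathfrak S(\mathbf A)}$. *)

theory Defs
  imports "HOL-Analysis.Analysis"
begin

record 'a pmv_alg =
  pcarrier :: "'a set"
  pmeet :: "'a \<Rightarrow> 'a \<Rightarrow> 'a"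
  pjoin :: "'a \<Rightarrow> 'a \<Rightarrow> 'a"
  podot :: "'a \<Rightarrow> 'a \<Rightarrow> 'a"
  poplus :: "'a \<Rightarrow> 'a \<Rightarrow> 'a"
  pzero :: 'a
  pone :: 'a

definition is_alg :: "'a pmv_alg \<Rightarrow> bool" where
  "is_alg A \<longleftrightarrow> pzero A \<in> pcarrier A \<and> pone A \<in> pcarrier A \<and>
     (\<forall>x\<in>pcarrier A. \<forall>y\<in>pcarrier A.
        pmeet A x y \<in> pcarrier A \<and> pjoin A x y \<in> pcarrier A \<and>
        podot A x y \<in> pcarrier A \<and> poplus A x y \<in> pcarrier A)"

definition PL :: "nat \<Rightarrow> real pmv_alg" where
  "PL n = \<lparr> pcarrier = {real k / real n | k. k \<le> n},
            pmeet = min, pjoin = max,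
            podot = (\<lambda>x y. max 0 (x + y - 1)),
            poplus = (\<lambda>x y. min 1 (x + y)),
            pzero = 0, pone = 1 \<rparr>"

datatype pterm = Var nat | TMeet pterm pterm | TJoin pterm pterm
  | TOdot pterm pterm | TOplus pterm pterm | TZero | TOne

fun eval :: "'a pmv_alg \<Rightarrow> (nat \<Rightarrow> 'a) \<Rightarrow> pterm \<Rightarrow> 'a" where
  "eval A \<sigma> (Var i) = \<sigma> i"
| "eval A \<sigma> (TMeet s t) = pmeet A (eval A \<sigma> s) (eval A \<sigma> t)"
| "eval A \<sigma> (TJoin s t) = pjoin A (eval A \<sigma> s) (eval A \<sigma> t)"
| "eval A \<sigma> (TOdot s t) = podot A (eval A \<sigma> s) (eval A \<sigma> t)"
| "eval A \<sigma> (TOplus s t) = poplus A (eval A \<sigma> s) (eval A \<sigma> t)"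
| "eval A \<sigma> TZero = pzero A"
| "eval A \<sigma> TOne = pone A"

definition satisfies_eq :: "'a pmv_alg \<Rightarrow> pterm \<Rightarrow> pterm \<Rightarrow> bool" where
  "satisfies_eq A s t \<longleftrightarrow> (\<forall>\<sigma>. range \<sigma> \<subseteq> pcarrier A \<longrightarrow> eval A \<sigma> s = eval A \<sigma> t)"

text \<open>Membership in PMV_n, the variety generated by P L_n (= models of all equations
  valid in P L_n, by Birkhoff's HSP theorem).\<close>
definition in_PMV :: "nat \<Rightarrow> 'a pmv_alg \<Rightarrow> bool" where
  "in_PMV n A \<longleftrightarrow> is_alg A \<and>
     (\<forall>s t. satisfies_eq (PL n) s t \<longrightarrow> satisfies_eq A s t)"

definition hom :: "'a pmv_alg \<Rightarrow> 'b pmv_alg \<Rightarrow> ('a \<Rightarrow> 'b) set" where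
  "hom A B = {h \<in> pcarrier A \<rightarrow>\<^sub>E pcarrier B.
      (\<forall>x\<in>pcarrier A. \<forall>y\<in>pcarrier A.
         h (pmeet A x y) = pmeet B (h x) (h y) \<and>
         h (pjoin A x y) = pjoin B (h x) (h y) \<and>
         h (podot A x y) = podot B (h x) (h y) \<and>
         h (poplus A x y) = poplus B (h x) (h y)) \<and>
      h (pzero A) = pzero B \<and> h (pone A) = pone B}"

text \<open>Distributive skeleton: carrier of S(A); its lattice operations are those of A.\<close>
definition skel :: "'a pmv_alg \<Rightarrow> 'a set" where
  "skel A = {a \<in> pcarrier A. poplus A a a = a}"

definition dlhom :: "'a pmv_alg \<Rightarrow> ('a \<Rightarrow> real) set" where
  "dlhom A = {f \<in> skel A \<rightarrow>\<^sub>E {0, 1}.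
      (\<forall>x\<in>skel A. \<forall>y\<in>skel A.
         f (pmeet A x y) = min (f x) (f y) \<and> f (pjoin A x y) = max (f x) (f y)) \<and>
      f (pzero A) = 0 \<and> f (pone A) = 1}"

definition Dn_top :: "nat \<Rightarrow> 'a pmv_alg \<Rightarrow> ('a \<Rightarrow> real) topology" where
  "Dn_top n A = subtopology
     (product_topology (\<lambda>_. discrete_topology (pcarrier (PL n))) (pcarrier A)) (hom A (PL n))"

definition D_top :: "'a pmv_alg \<Rightarrow> ('a \<Rightarrow> real) topology" where
  "D_top A = subtopology
     (product_topology (\<lambda>_. discrete_topology {0::real, 1}) (skel A)) (dlhom A)"

definition eta :: "'a pmv_alg \<Rightarrow> ('a \<Rightarrow> real) \<Rightarrow> ('a \<Rightarrow> real)" where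
  "eta A u = restrict u (skel A)"

definition Dn_mor :: "'a pmv_alg \<Rightarrow> ('a \<Rightarrow> 'b) \<Rightarrow> ('b \<Rightarrow> real) \<Rightarrow> ('a \<Rightarrow> real)" where
  "Dn_mor A h u = restrict (u \<circ> h) (pcarrier A)"

definition DS_mor :: "'a pmv_alg \<Rightarrow> ('a \<Rightarrow> 'b) \<Rightarrow> ('b \<Rightarrow> real) \<Rightarrow> ('a \<Rightarrow> real)" where
  "DS_mor A h f = restrict (f \<circ> restrict h (skel A)) (skel A)"

end

theory Submission
  imports Defs
begin
fun subst :: "pterm \<Rightarrow> pterm \<Rightarrow> pterm" where
  "subst (Var i) S = S"
| "subst (TMeet s t) S = TMeet (subst s S) (subst t S)"
| "subst (TJoin s t) S = TJoin (subst s S) (subst t S)"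
| "subst (TOdot s t) S = TOdot (subst s S) (subst t S)"
| "subst (TOplus s t) S = TOplus (subst s S) (subst t S)"
| "subst TZero S = TZero"
| "subst TOne S = TOne"

fun cfree :: "pterm \<Rightarrow> bool" where
  "cfree (Var i) = True"
| "cfree (TMeet s t) = (cfree s \<and> cfree t)"
| "cfree (TJoin s t) = (cfree s \<and> cfree t)"
| "cfree (TOdot s t) = (cfree s \<and> cfree t)"
| "cfree (TOplus s t) = (cfree s \<and> cfree t)"
| "cfree TZero = False"
| "cfree TOne = False"

lemma eval_subst: "eval A \<sigma> (subst T S) = eval A (\<lambda>_. eval A \<sigma> S) T"
  by (induction T) auto

lemma cfree_subst: "cfree T \<Longrightarrow> cfree S \<Longrightarrow> cfree (subst T S)"
  by (induction T) auto

fun opl :: "nat \<Rightarrow> pterm \<Rightarrow> pterm" where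
  "opl 0 t = t"
| "opl (Suc m) t = TOplus t (opl m t)"

fun odt :: "nat \<Rightarrow> pterm \<Rightarrow> pterm" where
  "odt 0 t = t"
| "odt (Suc m) t = TOdot t (odt m t)"

lemma cfree_opl: "cfree t \<Longrightarrow> cfree (opl m t)" by (induction m) auto
lemma cfree_odt: "cfree t \<Longrightarrow> cfree (odt m t)" by (induction m) auto

lemma PL_simps [simp]:
  "pcarrier (PL n) = {real k / real n | k. k \<le> n}"
  "pmeet (PL n) = min" "pjoin (PL n) = max"
  "podot (PL n) = (\<lambda>x y. max 0 (x + y - 1))"
  "poplus (PL n) = (\<lambda>x y. min 1 (x + y))"
  "pzero (PL n) = 0" "pone (PL n) = 1"
  by (simp_all add: PL_def)

lemma eval_opl:
  assumes n: "n \<ge> 1" and "eval (PL n) \<sigma> t = real s / real n" "s \<le> n"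
  shows "eval (PL n) \<sigma> (opl m t) = real (min n (Suc m * s)) / real n"
proof (induction m)
  case 0 then show ?case using assms by simp
next
  case (Suc m)
  have "min 1 (real s / real n + real (min n (Suc m * s)) / real n)
      = real (min n (s + min n (Suc m * s))) / real n"
    using n by (simp add: field_simps min_def)
  also have "min n (s + min n (Suc m * s)) = min n (Suc (Suc m) * s)"
    by (simp add: min_def)
  finally show ?case using Suc assms by simp
qed

lemma eval_odt:
  assumes n: "n \<ge> 1" and "eval (PL n) \<sigma> t = real s / real n" "s \<le> n"
  shows "eval (PL n) \<sigma> (odt m t) = real (Suc m * s - m * n) / real n"
proof (induction m)
  case 0 then show ?case using assms by simp
next
  case (Suc m)
  have eq: "s + (Suc m * s - m * n) - n = Suc (Suc m) * s - Suc m * n"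
    using \<open>s \<le> n\<close> by (cases "Suc m * s \<ge> m * n") (auto simp: algebra_simps)
  have "max 0 (real s / real n + real (Suc m * s - m * n) / real n - 1)
      = real (s + (Suc m * s - m * n) - n) / real n"
    using n by (cases "s + (Suc m * s - m * n) \<ge> n") (auto simp: field_simps max_def of_nat_diff)
  then show ?case using Suc assms eq by simp
qed

lemma arith_key:
  fixes n a i q m d :: nat
  assumes "0 < a" "a < n" "i \<le> n" "q = (n - 1) div a" "d = n - q * a" "m = n div d"
  shows "q \<ge> 1" "d \<ge> 1" "d \<le> a" "m \<ge> 1" "n mod d < a"
    "m * min n (q * i) - (m - 1) * n \<le> n"
    "(n mod d < m * min n (q * i) - (m - 1) * n) \<longleftrightarrow> a < i"
proof -
  have q1: "q \<ge> 1" using assms by (simp add: div_le_mono le_div_geq)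
  have qa: "q * a \<le> n - 1" using assms div_times_less_eq_dividend by simp
  have qa2: "n - 1 < (q + 1) * a" using assms
    by (metis add.commute div_mult_mod_eq mod_less_divisor mult.commute mult_Suc plus_1_eq_Suc add_less_cancel_left)
  have d1: "d \<ge> 1" using qa assms(2,5) by linarith
  have "(q+1)*a = q*a + a" by simp
  then have da: "d \<le> a" using qa2 assms(2,5) by linarith
  have "0 < n div d" using d1 da assms(2) by (simp add: div_greater_zero_iff)
  then have m1: "m \<ge> 1" using assms(6) by simp
  have md: "m * d \<le> n" using assms div_times_less_eq_dividend by simp
  have amod: "n mod d = n - m * d" using assms by (metis minus_div_mult_eq_mod mult.commute)
  have "n mod d < d" using d1 by simp
  then show "n mod d < a" using da by simp
  show "q \<ge> 1" "d \<ge> 1" "d \<le> a" "m \<ge> 1" by fact+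
  have sle: "min n (q * i) \<le> n" by simp
  have "m * min n (q * i) \<le> m * n" using sle by simp
  moreover have "(m - 1) * n = m * n - n" by (simp add: diff_mult_distrib)
  moreover have "n \<le> m * n" using m1 by simp
  ultimately show "m * min n (q * i) - (m - 1) * n \<le> n" by linarith
  show "(n mod d < m * min n (q * i) - (m - 1) * n) \<longleftrightarrow> a < i"
  proof (cases "n \<le> q * i")
    case True
    have "m * n - (m - 1) * n = n" using m1 by (simp add: diff_mult_distrib)
    moreover have "q * a < q * i" using True qa assms(2) by linarith
    then have "a < i" by simp
    ultimately show ?thesis using True \<open>n mod d < a\<close> assms(2) by (simp add: min_def)
  next
    case False
    define X where "X = m * q * a"
    define Y where "Y = m * q * i"
    have mq: "m * q > 0" using m1 q1 by simp
    have XY: "a < i \<longleftrightarrow> X < Y" using mq by (simp add: X_def Y_def)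
    have mdX: "m * d = m * n - X" using assms(5) qa by (simp add: X_def diff_mult_distrib2 algebra_simps)
    have "m * min n (q * i) = Y" using False by (simp add: Y_def min_def algebra_simps)
    moreover have "(m - 1) * n = m * n - n" using m1 by (simp add: diff_mult_distrib)
    moreover have "q * a \<le> n" using qa by linarith
    then have "m * (q * a) \<le> m * n" by simp
    then have "X \<le> m * n" by (simp add: X_def algebra_simps)
    moreover have "n \<le> m * n" using m1 by simp
    ultimately show ?thesis using XY amod mdX md by linarith
  qed
qed

lemma pos_term:
  assumes n: "n \<ge> 1"
  shows "a < n \<Longrightarrow> \<exists>T. cfree T \<and> (\<forall>i\<le>n. \<exists>j\<le>n.
     eval (PL n) (\<lambda>_. real i / real n) T = real j / real n \<and> (0 < j \<longleftrightarrow> a < i))"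
proof (induction a rule: less_induct)
  case (less a)
  show ?case
  proof (cases "a = 0")
    case True then show ?thesis by (intro exI[of _ "Var 0"]) auto
  next
    case False
    define q where "q = (n - 1) div a"
    define d where "d = n - q * a"
    define m where "m = n div d"
    have a0: "0 < a" using False by simp
    note K = arith_key[of a n _ q d m, OF a0 less.prems _ q_def d_def m_def]
    obtain T' where T'c: "cfree T'" and T':
      "\<forall>i\<le>n. \<exists>j\<le>n. eval (PL n) (\<lambda>_. real i / real n) T' = real j / real n \<and> (0 < j \<longleftrightarrow> n mod d < i)"
      using less.IH[of "n mod d"] K(5) less.prems by force
    define G where "G = odt (m-1) (opl (q-1) (Var 0))"
    show ?thesis
    proof (intro exI[of _ "subst T' G"] conjI allI impI)
      show "cfree (subst T' G)" using T'c by (simp add: G_def cfree_subst cfree_odt cfree_opl)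
      fix i assume i: "i \<le> n"
      have q1: "Suc (q - 1) = q" using K(1)[OF i] by simp
      have m1: "Suc (m - 1) = m" using K(4)[OF i] by simp
      have e1: "eval (PL n) (\<lambda>_. real i / real n) (opl (q-1) (Var 0)) = real (min n (q * i)) / real n"
        using eval_opl[OF n, of "\<lambda>_. real i / real n" "Var 0" i "q - 1"] i q1 by simp
      have e2: "eval (PL n) (\<lambda>_. real i / real n) G = real (m * min n (q * i) - (m - 1) * n) / real n"
        unfolding G_def using eval_odt[OF n e1, of "m - 1"] m1 by simp
      obtain j where j: "j \<le> n" "eval (PL n) (\<lambda>_. real (m * min n (q * i) - (m - 1) * n) / real n) T' = real j / real n"
        "0 < j \<longleftrightarrow> n mod d < m * min n (q * i) - (m - 1) * n"
        using T' K(6)[OF i] by blast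
      show "\<exists>j\<le>n. eval (PL n) (\<lambda>_. real i / real n) (subst T' G) = real j / real n \<and> (0 < j \<longleftrightarrow> a < i)"
        using j K(7)[OF i] by (intro exI[of _ j]) (simp add: eval_subst e2)
    qed
  qed
qed

lemma thr_ex:
  assumes n: "n \<ge> 1" and k: "1 \<le> k" "k \<le> n"
  shows "\<exists>T. cfree T \<and> (\<forall>i\<le>n. eval (PL n) (\<lambda>_. real i / real n) T = (if k \<le> i then 1 else 0))"
proof -
  have kn: "k - 1 < n" using k by simp
  obtain T' where T'c: "cfree T'" and T':
      "\<forall>i\<le>n. \<exists>j\<le>n. eval (PL n) (\<lambda>_. real i / real n) T' = real j / real n \<and> (0 < j \<longleftrightarrow> k - 1 < i)"
    using pos_term[OF n kn] by blast
  show ?thesis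
  proof (intro exI[of _ "opl (n-1) T'"] conjI allI impI)
    show "cfree (opl (n - 1) T')" using T'c by (simp add: cfree_opl)
    fix i assume i: "i \<le> n"
    obtain j where j: "j \<le> n" "eval (PL n) (\<lambda>_. real i / real n) T' = real j / real n" "0 < j \<longleftrightarrow> k - 1 < i"
      using T' i by blast
    have "eval (PL n) (\<lambda>_. real i / real n) (opl (n-1) T') = real (min n (Suc (n-1) * j)) / real n"
      by (rule eval_opl[OF n j(2) j(1)])
    also have "Suc (n-1) = n" using n by simp
    also have "real (min n (n * j)) / real n = (if k \<le> i then 1 else 0)"
    proof (cases "j = 0")
      case True then show ?thesis using j(3) k by auto
    next
      case False
      then have "n \<le> n * j" by simp
      then show ?thesis using j(3) k n False by (simp add: min_def)
    qed
    finally show "eval (PL n) (\<lambda>_. real i / real n) (opl (n - 1) T') = (if k \<le> i then 1 else 0)" .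
  qed
qed

definition thr :: "nat \<Rightarrow> nat \<Rightarrow> pterm" where
  "thr n k = (SOME T. cfree T \<and> (\<forall>i\<le>n. eval (PL n) (\<lambda>_. real i / real n) T = (if k \<le> i then 1 else 0)))"

lemma thr:
  assumes "n \<ge> 1" "1 \<le> k" "k \<le> n"
  shows "cfree (thr n k)" "\<And>i. i \<le> n \<Longrightarrow> eval (PL n) (\<lambda>_. real i / real n) (thr n k) = (if k \<le> i then 1 else 0)"
  using someI_ex[OF thr_ex[OF assms]] unfolding thr_def by auto

lemma idx_ops:
  assumes n: "n \<ge> 1"
  shows "min 1 (real i / real n + real j / real n) = real (min n (i + j)) / real n"
    "max 0 (real i / real n + real j / real n - 1) = real (i + j - n) / real n"
    "min (real i / real n) (real j / real n) = real (min i j) / real n"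
    "max (real i / real n) (real j / real n) = real (max i j) / real n"
  using n by (auto simp: field_simps min_def max_def of_nat_diff)

lemma idx_consts:
  assumes n: "n \<ge> 1"
  shows "(0::real) = real 0 / real n" "(1::real) = real n / real n"
  using n by auto

lemma inC: "x \<in> pcarrier (PL n) \<Longrightarrow> \<exists>i\<le>n. x = real i / real n"
  by auto

lemma PL_alg: "n \<ge> 1 \<Longrightarrow> is_alg (PL n)"
  unfolding is_alg_def
proof (intro conjI ballI)
  assume n: "n \<ge> 1"
  show "pzero (PL n) \<in> pcarrier (PL n)" by (simp, rule exI[of _ 0], simp)
  have "real n / real n \<in> {real k / real n | k. k \<le> n}" by blast
  then show "pone (PL n) \<in> pcarrier (PL n)" using n by simp
  fix x y assume "x \<in> pcarrier (PL n)" "y \<in> pcarrier (PL n)"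
  then obtain i j where ij: "i \<le> n" "j \<le> n" "x = real i / real n" "y = real j / real n" by auto
  show "pmeet (PL n) x y \<in> pcarrier (PL n)" using ij idx_ops[OF n, of i j]
    by (simp, intro exI[of _ "min i j"], auto)
  show "pjoin (PL n) x y \<in> pcarrier (PL n)" using ij idx_ops[OF n, of i j]
    by (simp, intro exI[of _ "max i j"], auto)
  show "podot (PL n) x y \<in> pcarrier (PL n)" using ij idx_ops[OF n, of i j]
    by (simp, intro exI[of _ "i + j - n"], auto)
  show "poplus (PL n) x y \<in> pcarrier (PL n)" using ij idx_ops[OF n, of i j]
    by (simp, intro exI[of _ "min n (i + j)"], auto)
qed

lemma eval_closed: "is_alg A \<Longrightarrow> range \<sigma> \<subseteq> pcarrier A \<Longrightarrow> eval A \<sigma> t \<in> pcarrier A"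
  by (induction t) (auto simp: is_alg_def)

lemma transfer: "in_PMV n A \<Longrightarrow> satisfies_eq (PL n) s t \<Longrightarrow> range \<sigma> \<subseteq> pcarrier A \<Longrightarrow> eval A \<sigma> s = eval A \<sigma> t"
  unfolding in_PMV_def satisfies_eq_def by blast

lemma hom_eval:
  assumes "h \<in> hom A B" "range \<sigma> \<subseteq> pcarrier A" "is_alg A"
  shows "h (eval A \<sigma> t) = eval B (h \<circ> \<sigma>) t"
  using assms
proof (induction t)
  case (Var x) then show ?case by simp
qed (auto simp: hom_def eval_closed)

abbreviation "Tz n k S \<equiv> subst (thr n k) S"
abbreviation "x0 \<equiv> Var 0"
abbreviation "y1 \<equiv> Var (Suc 0)"

lemma PL_eq_intro:
  assumes "\<And>i j. i \<le> n \<Longrightarrow> j \<le> n \<Longrightarrow>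
     eval (PL n) (\<lambda>v. if v = 0 then real i / real n else real j / real n) s =
     eval (PL n) (\<lambda>v. if v = 0 then real i / real n else real j / real n) t"
    and "\<And>\<sigma> \<sigma>'. \<sigma> 0 = \<sigma>' 0 \<Longrightarrow> \<sigma> (Suc 0) = \<sigma>' (Suc 0) \<Longrightarrow> eval (PL n) \<sigma> s = eval (PL n) \<sigma>' s"
    and "\<And>\<sigma> \<sigma>'. \<sigma> 0 = \<sigma>' 0 \<Longrightarrow> \<sigma> (Suc 0) = \<sigma>' (Suc 0) \<Longrightarrow> eval (PL n) \<sigma> t = eval (PL n) \<sigma>' t"
  shows "satisfies_eq (PL n) s t"
  unfolding satisfies_eq_def
proof (intro allI impI)
  fix \<sigma> :: "nat \<Rightarrow> real" assume "range \<sigma> \<subseteq> pcarrier (PL n)"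
  then obtain i j where ij: "i \<le> n" "j \<le> n" "\<sigma> 0 = real i / real n" "\<sigma> (Suc 0) = real j / real n"
    by (metis (no_types, lifting) inC range_subsetD)
  let ?\<tau> = "\<lambda>v. if v = 0 then real i / real n else real j / real n"
  have "eval (PL n) \<sigma> s = eval (PL n) ?\<tau> s" by (rule assms(2)) (use ij in auto)
  also have "\<dots> = eval (PL n) ?\<tau> t" by (rule assms(1)[OF ij(1,2)])
  also have "\<dots> = eval (PL n) \<sigma> t" by (rule assms(3)) (use ij in auto)
  finally show "eval (PL n) \<sigma> s = eval (PL n) \<sigma> t" .
qed

context fixes n :: nat assumes n1: "n \<ge> 1" begin

lemma thr_val: "1 \<le> k \<Longrightarrow> k \<le> n \<Longrightarrow> i \<le> n \<Longrightarrow>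
    eval (PL n) (\<lambda>_. real i / real n) (thr n k) = (if k \<le> i then 1 else 0)"
  using thr(2)[OF n1] by blast

lemma thr_zero: "1 \<le> k \<Longrightarrow> k \<le> n \<Longrightarrow> eval (PL n) (\<lambda>_. 0) (thr n k) = 0"
  using thr_val[of k 0] by simp

lemma thr_one: "1 \<le> k \<Longrightarrow> k \<le> n \<Longrightarrow> eval (PL n) (\<lambda>_. 1) (thr n k) = 1"
  using thr_val[of k n] n1 by simp

lemmas ev = eval_subst idx_ops[OF n1] thr_val thr_zero thr_one

lemma I_skel: "1 \<le> k \<Longrightarrow> k \<le> n \<Longrightarrow> satisfies_eq (PL n) (TOplus (Tz n k x0) (Tz n k x0)) (Tz n k x0)"
  by (rule PL_eq_intro) (auto simp: ev)

lemma I_chain: "1 \<le> j \<Longrightarrow> j \<le> k \<Longrightarrow> k \<le> n \<Longrightarrow> satisfies_eq (PL n) (TMeet (Tz n k x0) (Tz n j x0)) (Tz n k x0)"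
  by (rule PL_eq_intro) (auto simp: ev)

lemma I_zero: "1 \<le> k \<Longrightarrow> k \<le> n \<Longrightarrow> satisfies_eq (PL n) (Tz n k TZero) TZero"
  by (rule PL_eq_intro) (auto simp: ev)

lemma I_one: "1 \<le> k \<Longrightarrow> k \<le> n \<Longrightarrow> satisfies_eq (PL n) (Tz n k TOne) TOne"
  by (rule PL_eq_intro) (auto simp: ev)

lemma I_meet: "1 \<le> k \<Longrightarrow> k \<le> n \<Longrightarrow> satisfies_eq (PL n) (Tz n k (TMeet x0 y1)) (TMeet (Tz n k x0) (Tz n k y1))"
  by (rule PL_eq_intro) (auto simp: ev)

lemma I_join: "1 \<le> k \<Longrightarrow> k \<le> n \<Longrightarrow> satisfies_eq (PL n) (Tz n k (TJoin x0 y1)) (TJoin (Tz n k x0) (Tz n k y1))"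
  by (rule PL_eq_intro) (auto simp: ev)

lemma I_opl_lo: "1 \<le> i \<Longrightarrow> 1 \<le> j \<Longrightarrow> i \<le> n \<Longrightarrow> j \<le> n \<Longrightarrow> 1 \<le> k \<Longrightarrow> k \<le> n \<Longrightarrow> k \<le> i + j \<Longrightarrow>
  satisfies_eq (PL n) (TMeet (Tz n k (TOplus x0 y1)) (TMeet (Tz n i x0) (Tz n j y1))) (TMeet (Tz n i x0) (Tz n j y1))"
  by (rule PL_eq_intro) (auto simp: ev)

lemma I_opl_lo1: "1 \<le> k \<Longrightarrow> k \<le> n \<Longrightarrow>
  satisfies_eq (PL n) (TMeet (Tz n k (TOplus x0 y1)) (Tz n k x0)) (Tz n k x0)"
  by (rule PL_eq_intro) (auto simp: ev)

lemma I_opl_lo2: "1 \<le> k \<Longrightarrow> k \<le> n \<Longrightarrow>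
  satisfies_eq (PL n) (TMeet (Tz n k (TOplus x0 y1)) (Tz n k y1)) (Tz n k y1)"
  by (rule PL_eq_intro) (auto simp: ev)

lemma I_opl_hi: "1 \<le> i \<Longrightarrow> i \<le> k \<Longrightarrow> k \<le> n \<Longrightarrow>
  satisfies_eq (PL n) (TMeet (Tz n k (TOplus x0 y1)) (TJoin (Tz n i x0) (Tz n (k + 1 - i) y1))) (Tz n k (TOplus x0 y1))"
  by (rule PL_eq_intro) (auto simp: ev)

lemma I_odt_lo: "1 \<le> i \<Longrightarrow> 1 \<le> j \<Longrightarrow> i \<le> n \<Longrightarrow> j \<le> n \<Longrightarrow> 1 \<le> k \<Longrightarrow> k \<le> n \<Longrightarrow> k + n \<le> i + j \<Longrightarrow>
  satisfies_eq (PL n) (TMeet (Tz n k (TOdot x0 y1)) (TMeet (Tz n i x0) (Tz n j y1))) (TMeet (Tz n i x0) (Tz n j y1))"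
  by (rule PL_eq_intro) (auto simp: ev)

lemma I_odt_hi: "1 \<le> i \<Longrightarrow> 1 \<le> j \<Longrightarrow> i \<le> n \<Longrightarrow> j \<le> n \<Longrightarrow> 1 \<le> k \<Longrightarrow> k \<le> n \<Longrightarrow> i + j = k + n + 1 \<Longrightarrow>
  satisfies_eq (PL n) (TMeet (Tz n k (TOdot x0 y1)) (TJoin (Tz n i x0) (Tz n j y1))) (Tz n k (TOdot x0 y1))"
  by (rule PL_eq_intro) (auto simp: ev)

lemma I_odt_hi1: "1 \<le> k \<Longrightarrow> k \<le> n \<Longrightarrow>
  satisfies_eq (PL n) (TMeet (Tz n k (TOdot x0 y1)) (Tz n k x0)) (Tz n k (TOdot x0 y1))"
  by (rule PL_eq_intro) (auto simp: ev)

lemma I_odt_hi2: "1 \<le> k \<Longrightarrow> k \<le> n \<Longrightarrow>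
  satisfies_eq (PL n) (TMeet (Tz n k (TOdot x0 y1)) (Tz n k y1)) (Tz n k (TOdot x0 y1))"
  by (rule PL_eq_intro) (auto simp: ev)

lemma sk_aux:
  "min 1 (2 * real (min i j) / real n) = min (min 1 (2 * real i / real n)) (min 1 (2 * real j / real n))"
  "min 1 (2 * real (max i j) / real n) = max (min 1 (2 * real i / real n)) (min 1 (2 * real j / real n))"
proof -
  have m: "2 * real i / real n \<le> 2 * real j / real n" if "i \<le> j" for i j
    using that by (simp add: divide_right_mono)
  show "min 1 (2 * real (min i j) / real n) = min (min 1 (2 * real i / real n)) (min 1 (2 * real j / real n))"
    using m[of i j] m[of j i] by (cases "i \<le> j") (auto simp: min_def)
  show "min 1 (2 * real (max i j) / real n) = max (min 1 (2 * real i / real n)) (min 1 (2 * real j / real n))"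
    using m[of i j] m[of j i] by (cases "i \<le> j") (auto simp: min_def max_def)
qed

lemma I_skmeet: "satisfies_eq (PL n) (TOplus (TMeet x0 y1) (TMeet x0 y1)) (TMeet (TOplus x0 x0) (TOplus y1 y1))"
  by (rule PL_eq_intro) (auto simp: ev sk_aux)

lemma I_skjoin: "satisfies_eq (PL n) (TOplus (TJoin x0 y1) (TJoin x0 y1)) (TJoin (TOplus x0 x0) (TOplus y1 y1))"
  by (rule PL_eq_intro) (auto simp: ev sk_aux)

lemma I_idem: "satisfies_eq (PL n) (TMeet x0 x0) x0" "satisfies_eq (PL n) (TJoin x0 x0) x0"
  by (rule PL_eq_intro; auto simp: ev)+

lemma I_N: "satisfies_eq (PL n) (TOdot (opl (n - 1) x0) (opl (n - 1) x0)) (opl (n - 1) x0)"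
proof (rule PL_eq_intro)
  fix i j assume i: "i \<le> n" "j \<le> n"
  let ?\<tau> = "\<lambda>v. if v = 0 then real i / real n else real j / real n"
  have e: "eval (PL n) ?\<tau> (opl (n - 1) x0) = real (min n (Suc (n - 1) * i)) / real n"
    by (rule eval_opl[OF n1]) (use i in auto)
  have "Suc (n - 1) = n" using n1 by simp
  then show "eval (PL n) ?\<tau> (TOdot (opl (n - 1) x0) (opl (n - 1) x0)) = eval (PL n) ?\<tau> (opl (n - 1) x0)"
    using e n1 by (cases "i = 0") (auto simp: min_def)
next
  fix \<sigma> \<sigma>' :: "nat \<Rightarrow> real" assume "\<sigma> 0 = \<sigma>' 0"
  moreover have "\<And>m. eval (PL n) \<sigma> (opl m x0) = eval (PL n) \<sigma>' (opl m x0)"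
    subgoal for m using \<open>\<sigma> 0 = \<sigma>' 0\<close> by (induction m) auto done
  ultimately show "eval (PL n) \<sigma> (TOdot (opl (n - 1) x0) (opl (n - 1) x0)) = eval (PL n) \<sigma>' (TOdot (opl (n - 1) x0) (opl (n - 1) x0))"
     "eval (PL n) \<sigma> (opl (n - 1) x0) = eval (PL n) \<sigma>' (opl (n - 1) x0)" by auto
qed

end

definition tA :: "nat \<Rightarrow> 'a pmv_alg \<Rightarrow> nat \<Rightarrow> 'a \<Rightarrow> 'a" where
  "tA n A k a = eval A (\<lambda>_. a) (thr n k)"

lemma I_consts: "n \<ge> 1 \<Longrightarrow> satisfies_eq (PL n) (TOplus TZero TZero) TZero"
  "n \<ge> 1 \<Longrightarrow> satisfies_eq (PL n) (TOplus TOne TOne) TOne"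
  by (rule PL_eq_intro; auto)+

locale pmvA = fixes n :: nat and A :: "'a pmv_alg" assumes n1: "n \<ge> 1" and PMV: "in_PMV n A"
begin

lemma alg: "is_alg A" using PMV by (simp add: in_PMV_def)

definition sab :: "'a \<Rightarrow> 'a \<Rightarrow> nat \<Rightarrow> 'a" where "sab a b = (\<lambda>v. if v = 0 then a else b)"

lemma sab_simps [simp]: "sab a b 0 = a" "sab a b (Suc 0) = b" by (simp_all add: sab_def)

lemma tr: "satisfies_eq (PL n) s t \<Longrightarrow> a \<in> pcarrier A \<Longrightarrow> b \<in> pcarrier A \<Longrightarrow> eval A (sab a b) s = eval A (sab a b) t"
  by (rule transfer[OF PMV]) (auto simp: sab_def)

lemma evA [simp]:
  "eval A (sab a b) (Tz n k x0) = tA n A k a"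
  "eval A (sab a b) (Tz n k y1) = tA n A k b"
  "eval A (sab a b) (Tz n k (TOplus x0 y1)) = tA n A k (poplus A a b)"
  "eval A (sab a b) (Tz n k (TOdot x0 y1)) = tA n A k (podot A a b)"
  "eval A (sab a b) (Tz n k (TMeet x0 y1)) = tA n A k (pmeet A a b)"
  "eval A (sab a b) (Tz n k (TJoin x0 y1)) = tA n A k (pjoin A a b)"
  "eval A (sab a b) (Tz n k TZero) = tA n A k (pzero A)"
  "eval A (sab a b) (Tz n k TOne) = tA n A k (pone A)"
  "eval A (sab a b) x0 = a" "eval A (sab a b) y1 = b"
  by (simp_all add: eval_subst tA_def sab_def)

lemma carr: "a \<in> pcarrier A \<Longrightarrow> b \<in> pcarrier A \<Longrightarrow>
   pmeet A a b \<in> pcarrier A \<and> pjoin A a b \<in> pcarrier A \<and> podot A a b \<in> pcarrier A \<and> poplus A a b \<in> pcarrier A"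
  "pzero A \<in> pcarrier A" "pone A \<in> pcarrier A"
  using alg by (auto simp: is_alg_def)

lemma tA_carr: "a \<in> pcarrier A \<Longrightarrow> tA n A k a \<in> pcarrier A"
  unfolding tA_def by (rule eval_closed[OF alg]) auto

lemma skel_iff: "a \<in> skel A \<longleftrightarrow> a \<in> pcarrier A \<and> poplus A a a = a" by (simp add: skel_def)

lemma tA_skel: "a \<in> pcarrier A \<Longrightarrow> 1 \<le> k \<Longrightarrow> k \<le> n \<Longrightarrow> tA n A k a \<in> skel A"
  using tr[OF I_skel[OF n1], of k a a] tA_carr by (simp add: skel_iff)

lemma skel_consts: "pzero A \<in> skel A" "pone A \<in> skel A"
  using tr[OF I_consts(1)[OF n1], of "pzero A" "pzero A"] tr[OF I_consts(2)[OF n1], of "pzero A" "pzero A"] carr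
  by (auto simp: skel_iff)

lemma skel_meet: "a \<in> skel A \<Longrightarrow> b \<in> skel A \<Longrightarrow> pmeet A a b \<in> skel A"
  using tr[OF I_skmeet[OF n1], of a b] carr by (auto simp: skel_iff)

lemma skel_join: "a \<in> skel A \<Longrightarrow> b \<in> skel A \<Longrightarrow> pjoin A a b \<in> skel A"
  using tr[OF I_skjoin[OF n1], of a b] carr by (auto simp: skel_iff)

lemma skel_odot: assumes "a \<in> skel A" shows "podot A a a = a"
proof -
  have ac: "a \<in> pcarrier A" and aa: "poplus A a a = a" using assms by (auto simp: skel_iff)
  have e: "eval A (sab a a) (opl m x0) = a" for m by (induction m) (auto simp: aa)
  show ?thesis using tr[OF I_N[OF n1] ac ac] by (simp add: e)
qed

lemma cfree_skel: assumes "a \<in> skel A" shows "cfree T \<Longrightarrow> eval A (\<lambda>_. a) T = a"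
proof (induction T)
  case (TMeet s t)
  have ac: "a \<in> pcarrier A" using assms by (auto simp: skel_iff)
  show ?case using TMeet tr[OF I_idem(1)[OF n1] ac ac] by simp
next
  case (TJoin s t)
  have ac: "a \<in> pcarrier A" using assms by (auto simp: skel_iff)
  show ?case using TJoin tr[OF I_idem(2)[OF n1] ac ac] by simp
next
  case (TOdot s t) then show ?case using skel_odot[OF assms] by simp
next
  case (TOplus s t) then show ?case using assms by (simp add: skel_iff)
qed auto

lemma tA_skel_id: "a \<in> skel A \<Longrightarrow> 1 \<le> k \<Longrightarrow> k \<le> n \<Longrightarrow> tA n A k a = a"
  unfolding tA_def by (rule cfree_skel) (auto intro: thr(1)[OF n1])

end

lemma downclosed_ex:
  fixes n :: nat
  assumes "\<And>j k. 1 \<le> j \<Longrightarrow> j \<le> k \<Longrightarrow> k \<le> n \<Longrightarrow> Q k \<Longrightarrow> Q j"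
  shows "\<exists>p\<le>n. \<forall>j\<in>{1..n}. Q j \<longleftrightarrow> j \<le> p"
proof (cases "{j\<in>{1..n}. Q j} = {}")
  case True
  then have "\<forall>j\<in>{1..n}. Q j \<longleftrightarrow> j \<le> 0" by auto
  then show ?thesis by blast
next
  case False
  let ?S = "{j\<in>{1..n}. Q j}"
  have fin: "finite ?S" by simp
  have M: "Max ?S \<in> ?S" using Max_in[OF fin False] .
  show ?thesis
  proof (intro exI[of _ "Max ?S"] conjI ballI iffI)
    show "Max ?S \<le> n" using M by auto
    fix j assume j: "j \<in> {1..n}"
    { assume "Q j" then show "j \<le> Max ?S" using j fin by (intro Max_ge) auto }
    { assume "j \<le> Max ?S" then show "Q j" using assms[of j "Max ?S"] M j by auto }
  qed
qed

context pmvA begin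

definition Pp :: "('a \<Rightarrow> real) \<Rightarrow> 'a \<Rightarrow> nat \<Rightarrow> bool" where
  "Pp f a p \<longleftrightarrow> p \<le> n \<and> (\<forall>j\<in>{1..n}. f (tA n A j a) = 1 \<longleftrightarrow> j \<le> p)"

definition pf :: "('a \<Rightarrow> real) \<Rightarrow> 'a \<Rightarrow> nat" where
  "pf f a = (SOME p. Pp f a p)"

lemma Pp_unique: "Pp f a p \<Longrightarrow> Pp f a q \<Longrightarrow> p = q"
proof (rule ccontr)
  assume P: "Pp f a p" "Pp f a q" "p \<noteq> q"
  show False
  proof (cases "p < q")
    case True
    then show False using P unfolding Pp_def by (metis atLeastAtMost_iff less_one not_le not_less_zero le_neq_implies_less order.refl le_trans nat_less_le less_le_trans One_nat_def Suc_leI)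
  next
    case False
    then have "q < p" using P by simp
    then show False using P unfolding Pp_def by (metis atLeastAtMost_iff less_one not_le not_less_zero le_neq_implies_less order.refl le_trans nat_less_le less_le_trans One_nat_def Suc_leI)
  qed
qed

lemma pf_eq: "Pp f a p \<Longrightarrow> pf f a = p"
  unfolding pf_def by (rule Pp_unique[OF someI], assumption+)

lemma f_props:
  assumes "f \<in> dlhom A"
  shows "\<And>s. s \<in> skel A \<Longrightarrow> f s \<in> {0, 1}"
    "\<And>s t. s \<in> skel A \<Longrightarrow> t \<in> skel A \<Longrightarrow> f (pmeet A s t) = min (f s) (f t)"
    "\<And>s t. s \<in> skel A \<Longrightarrow> t \<in> skel A \<Longrightarrow> f (pjoin A s t) = max (f s) (f t)"
    "f (pzero A) = 0" "f (pone A) = 1"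
  using assms unfolding dlhom_def by auto

lemma f_le:
  assumes "f \<in> dlhom A" "s \<in> skel A" "t \<in> skel A" "pmeet A s t = s"
  shows "f s \<le> f t"
  using f_props(2)[OF assms(1,2,3)] assms(4) by (metis min.cobounded2)

lemma Pp_ex:
  assumes f: "f \<in> dlhom A" and a: "a \<in> pcarrier A"
  shows "Pp f a (pf f a)"
proof -
  have "\<exists>p\<le>n. \<forall>j\<in>{1..n}. f (tA n A j a) = 1 \<longleftrightarrow> j \<le> p"
  proof (rule downclosed_ex)
    fix j k assume jk: "1 \<le> j" "j \<le> k" "k \<le> n" "f (tA n A k a) = 1"
    have "pmeet A (tA n A k a) (tA n A j a) = tA n A k a"
      using tr[OF I_chain[OF n1 jk(1,2,3)] a a] by simp
    moreover have "tA n A k a \<in> skel A" "tA n A j a \<in> skel A" using tA_skel[OF a] jk by auto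
    ultimately have "f (tA n A k a) \<le> f (tA n A j a)"
      using f_le[OF f] by blast
    moreover have "f (tA n A j a) \<in> {0,1}" using f_props(1)[OF f tA_skel[OF a]] jk by auto
    ultimately show "f (tA n A j a) = 1" using jk by auto
  qed
  then have "\<exists>p. Pp f a p" unfolding Pp_def by blast
  then show ?thesis unfolding pf_def by (rule someI_ex)
qed

lemma f_le':
  assumes "f \<in> dlhom A" "s \<in> skel A" "t \<in> skel A" "pmeet A t s = s"
  shows "f s \<le> f t"
  using f_props(2)[OF assms(1,3,2)] assms(4) by (metis min.cobounded1)

lemma fv:
  assumes f: "f \<in> dlhom A" and a: "a \<in> pcarrier A" and j: "1 \<le> j" "j \<le> n"
  shows "f (tA n A j a) = (if j \<le> pf f a then 1 else 0)"
proof -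
  have "f (tA n A j a) \<in> {0,1}" using f_props(1)[OF f tA_skel[OF a j]] .
  moreover have "f (tA n A j a) = 1 \<longleftrightarrow> j \<le> pf f a" using Pp_ex[OF f a] j unfolding Pp_def by auto
  ultimately show ?thesis by auto
qed

lemma pf_le: "f \<in> dlhom A \<Longrightarrow> a \<in> pcarrier A \<Longrightarrow> pf f a \<le> n"
  using Pp_ex unfolding Pp_def by blast

lemma Pp_intro:
  assumes f: "f \<in> dlhom A" and c: "c \<in> pcarrier A" and p: "p \<le> n"
   and h: "\<And>j. 1 \<le> j \<Longrightarrow> j \<le> n \<Longrightarrow> j \<le> p \<Longrightarrow> f (tA n A j c) = 1"
   and h2: "\<And>j. 1 \<le> j \<Longrightarrow> j \<le> n \<Longrightarrow> \<not> j \<le> p \<Longrightarrow> f (tA n A j c) = 0"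
  shows "pf f c = p"
proof (rule pf_eq)
  show "Pp f c p" unfolding Pp_def using p h h2 by force
qed

lemma pf_oplus:
  assumes f: "f \<in> dlhom A" and a: "a \<in> pcarrier A" and b: "b \<in> pcarrier A"
  shows "pf f (poplus A a b) = min n (pf f a + pf f b)"
proof -
  define p where "p = pf f a"
  define q where "q = pf f b"
  have c: "poplus A a b \<in> pcarrier A" using carr(1)[OF a b] by blast
  have pn: "p \<le> n" "q \<le> n" using pf_le[OF f a] pf_le[OF f b] by (auto simp: p_def q_def)
  have fa: "\<And>j. 1 \<le> j \<Longrightarrow> j \<le> n \<Longrightarrow> f (tA n A j a) = (if j \<le> p then 1 else 0)"
    using fv[OF f a] p_def by simp
  have fb: "\<And>j. 1 \<le> j \<Longrightarrow> j \<le> n \<Longrightarrow> f (tA n A j b) = (if j \<le> q then 1 else 0)"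
    using fv[OF f b] q_def by simp
  have sk: "\<And>j x. x \<in> pcarrier A \<Longrightarrow> 1 \<le> j \<Longrightarrow> j \<le> n \<Longrightarrow> tA n A j x \<in> skel A" using tA_skel by blast
  have v01: "\<And>j. 1 \<le> j \<Longrightarrow> j \<le> n \<Longrightarrow> f (tA n A j (poplus A a b)) \<in> {0,1}"
    using f_props(1)[OF f sk[OF c]] by blast
  show ?thesis unfolding p_def[symmetric] q_def[symmetric]
  proof (rule Pp_intro[OF f c])
    show "min n (p + q) \<le> n" by simp
    fix j assume j: "1 \<le> j" "j \<le> n"
    { assume jl: "j \<le> min n (p + q)"
      have "1 \<le> f (tA n A j (poplus A a b))"
      proof (cases "j \<le> p")
        case True
        have "pmeet A (tA n A j (poplus A a b)) (tA n A j a) = tA n A j a"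
          using tr[OF I_opl_lo1[OF n1 j] a b] by simp
        from f_le'[OF f sk[OF a j] sk[OF c j] this] show ?thesis using fa[OF j] True by simp
      next
        case F1: False
        show ?thesis
        proof (cases "j \<le> q")
          case True
          have "pmeet A (tA n A j (poplus A a b)) (tA n A j b) = tA n A j b"
            using tr[OF I_opl_lo2[OF n1 j] a b] by simp
          from f_le'[OF f sk[OF b j] sk[OF c j] this] show ?thesis using fb[OF j] True by simp
        next
          case False
          have i1: "1 \<le> p" "1 \<le> j - p" "p \<le> n" "j - p \<le> n" "j \<le> p + (j - p)" using F1 False jl pn by auto
          have e: "pmeet A (tA n A j (poplus A a b)) (pmeet A (tA n A p a) (tA n A (j - p) b)) = pmeet A (tA n A p a) (tA n A (j - p) b)"
            using tr[OF I_opl_lo[OF n1 i1(1,2,3,4) j i1(5)] a b] by simp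
          have s1: "pmeet A (tA n A p a) (tA n A (j - p) b) \<in> skel A"
            by (rule skel_meet) (use sk a b i1 in auto)
          have "f (pmeet A (tA n A p a) (tA n A (j - p) b)) = 1"
            using f_props(2)[OF f sk[OF a i1(1,3)] sk[OF b i1(2,4)]] fa[OF i1(1,3)] fb[OF i1(2,4)] jl by auto
          with f_le'[OF f s1 sk[OF c j] e] show ?thesis by simp
        qed
      qed
      then show "f (tA n A j (poplus A a b)) = 1" using v01[OF j] by auto }
    { assume jl: "\<not> j \<le> min n (p + q)"
      have i1: "1 \<le> p + 1" "p + 1 \<le> j" "1 \<le> j + 1 - (p + 1)" "j + 1 - (p + 1) \<le> n" "p + 1 \<le> n"
        using jl j by auto
      have e: "pmeet A (tA n A j (poplus A a b)) (pjoin A (tA n A (p + 1) a) (tA n A (j + 1 - (p + 1)) b)) = tA n A j (poplus A a b)"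
        using tr[OF I_opl_hi[OF n1 i1(1,2) j(2)] a b] by simp
      have s1: "pjoin A (tA n A (p + 1) a) (tA n A (j + 1 - (p + 1)) b) \<in> skel A"
        by (rule skel_join) (use sk a b i1 in auto)
      have "f (pjoin A (tA n A (p + 1) a) (tA n A (j + 1 - (p + 1)) b)) = 0"
        using f_props(3)[OF f sk[OF a i1(1,5)] sk[OF b i1(3,4)]] fa[OF i1(1,5)] fb[OF i1(3,4)] jl j by auto
      with f_le[OF f sk[OF c j] s1 e] have "f (tA n A j (poplus A a b)) \<le> 0" by simp
      then show "f (tA n A j (poplus A a b)) = 0" using v01[OF j] by auto }
  qed
qed

lemma pf_odot:
  assumes f: "f \<in> dlhom A" and a: "a \<in> pcarrier A" and b: "b \<in> pcarrier A"
  shows "pf f (podot A a b) = pf f a + pf f b - n"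
proof -
  define p where "p = pf f a"
  define q where "q = pf f b"
  have c: "podot A a b \<in> pcarrier A" using carr(1)[OF a b] by blast
  have pn: "p \<le> n" "q \<le> n" using pf_le[OF f a] pf_le[OF f b] by (auto simp: p_def q_def)
  have fa: "\<And>j. 1 \<le> j \<Longrightarrow> j \<le> n \<Longrightarrow> f (tA n A j a) = (if j \<le> p then 1 else 0)"
    using fv[OF f a] p_def by simp
  have fb: "\<And>j. 1 \<le> j \<Longrightarrow> j \<le> n \<Longrightarrow> f (tA n A j b) = (if j \<le> q then 1 else 0)"
    using fv[OF f b] q_def by simp
  have sk: "\<And>j x. x \<in> pcarrier A \<Longrightarrow> 1 \<le> j \<Longrightarrow> j \<le> n \<Longrightarrow> tA n A j x \<in> skel A" using tA_skel by blast
  have v01: "\<And>j. 1 \<le> j \<Longrightarrow> j \<le> n \<Longrightarrow> f (tA n A j (podot A a b)) \<in> {0,1}"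
    using f_props(1)[OF f sk[OF c]] by blast
  show ?thesis unfolding p_def[symmetric] q_def[symmetric]
  proof (rule Pp_intro[OF f c])
    show "p + q - n \<le> n" using pn by simp
    fix j assume j: "1 \<le> j" "j \<le> n"
    { assume jl: "j \<le> p + q - n"
      have i1: "1 \<le> p" "1 \<le> j + n - p" "p \<le> n" "j + n - p \<le> n" "j + n \<le> p + (j + n - p)"
        using jl j pn by auto
      have e: "pmeet A (tA n A j (podot A a b)) (pmeet A (tA n A p a) (tA n A (j + n - p) b)) = pmeet A (tA n A p a) (tA n A (j + n - p) b)"
        using tr[OF I_odt_lo[OF n1 i1(1,2,3,4) j i1(5)] a b] by simp
      have s1: "pmeet A (tA n A p a) (tA n A (j + n - p) b) \<in> skel A"
        by (rule skel_meet) (use sk a b i1 in auto)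
      have "f (pmeet A (tA n A p a) (tA n A (j + n - p) b)) = 1"
        using f_props(2)[OF f sk[OF a i1(1,3)] sk[OF b i1(2,4)]] fa[OF i1(1,3)] fb[OF i1(2,4)] jl j by auto
      with f_le'[OF f s1 sk[OF c j] e] have "1 \<le> f (tA n A j (podot A a b))" by simp
      then show "f (tA n A j (podot A a b)) = 1" using v01[OF j] by auto }
    { assume jl: "\<not> j \<le> p + q - n"
      have "f (tA n A j (podot A a b)) \<le> 0"
      proof (cases "j \<le> p")
        case F1: False
        have e: "pmeet A (tA n A j (podot A a b)) (tA n A j a) = tA n A j (podot A a b)"
          using tr[OF I_odt_hi1[OF n1 j] a b] by simp
        from f_le[OF f sk[OF c j] sk[OF a j] e] show ?thesis using fa[OF j] F1 by simp
      next
        case T1: True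
        show ?thesis
        proof (cases "j \<le> q")
          case False
          have e: "pmeet A (tA n A j (podot A a b)) (tA n A j b) = tA n A j (podot A a b)"
            using tr[OF I_odt_hi2[OF n1 j] a b] by simp
          from f_le[OF f sk[OF c j] sk[OF b j] e] show ?thesis using fb[OF j] False by simp
        next
          case True
          have i1: "1 \<le> p + 1" "1 \<le> j + n - p" "p + 1 \<le> n" "j + n - p \<le> n" "p + 1 + (j + n - p) = j + n + 1"
            using jl j pn T1 True by auto
          have e: "pmeet A (tA n A j (podot A a b)) (pjoin A (tA n A (p + 1) a) (tA n A (j + n - p) b)) = tA n A j (podot A a b)"
            using tr[OF I_odt_hi[OF n1 i1(1,2,3,4) j i1(5)] a b] by simp
          have s1: "pjoin A (tA n A (p + 1) a) (tA n A (j + n - p) b) \<in> skel A"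
            by (rule skel_join) (use sk a b i1 in auto)
          have "f (pjoin A (tA n A (p + 1) a) (tA n A (j + n - p) b)) = 0"
            using f_props(3)[OF f sk[OF a i1(1,3)] sk[OF b i1(2,4)]] fa[OF i1(1,3)] fb[OF i1(2,4)] jl j by auto
          with f_le[OF f sk[OF c j] s1 e] show ?thesis by simp
        qed
      qed
      then show "f (tA n A j (podot A a b)) = 0" using v01[OF j] by auto }
  qed
qed

lemma pf_meet:
  assumes f: "f \<in> dlhom A" and a: "a \<in> pcarrier A" and b: "b \<in> pcarrier A"
  shows "pf f (pmeet A a b) = min (pf f a) (pf f b)"
proof -
  have c: "pmeet A a b \<in> pcarrier A" using carr(1)[OF a b] by blast
  show ?thesis
  proof (rule Pp_intro[OF f c])
    show "min (pf f a) (pf f b) \<le> n" using pf_le[OF f a] by simp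
    fix j assume j: "1 \<le> j" "j \<le> n"
    have "tA n A j (pmeet A a b) = pmeet A (tA n A j a) (tA n A j b)"
      using tr[OF I_meet[OF n1 j] a b] by simp
    then have "f (tA n A j (pmeet A a b)) = min (if j \<le> pf f a then 1 else 0) (if j \<le> pf f b then 1 else 0)"
      using f_props(2)[OF f tA_skel[OF a j] tA_skel[OF b j]] fv[OF f a j] fv[OF f b j] by simp
    then show "j \<le> min (pf f a) (pf f b) \<Longrightarrow> f (tA n A j (pmeet A a b)) = 1"
      "\<not> j \<le> min (pf f a) (pf f b) \<Longrightarrow> f (tA n A j (pmeet A a b)) = 0" by auto
  qed
qed

lemma pf_join:
  assumes f: "f \<in> dlhom A" and a: "a \<in> pcarrier A" and b: "b \<in> pcarrier A"
  shows "pf f (pjoin A a b) = max (pf f a) (pf f b)"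
proof -
  have c: "pjoin A a b \<in> pcarrier A" using carr(1)[OF a b] by blast
  show ?thesis
  proof (rule Pp_intro[OF f c])
    show "max (pf f a) (pf f b) \<le> n" using pf_le[OF f a] pf_le[OF f b] by simp
    fix j assume j: "1 \<le> j" "j \<le> n"
    have "tA n A j (pjoin A a b) = pjoin A (tA n A j a) (tA n A j b)"
      using tr[OF I_join[OF n1 j] a b] by simp
    then have "f (tA n A j (pjoin A a b)) = max (if j \<le> pf f a then 1 else 0) (if j \<le> pf f b then 1 else 0)"
      using f_props(3)[OF f tA_skel[OF a j] tA_skel[OF b j]] fv[OF f a j] fv[OF f b j] by simp
    then show "j \<le> max (pf f a) (pf f b) \<Longrightarrow> f (tA n A j (pjoin A a b)) = 1"
      "\<not> j \<le> max (pf f a) (pf f b) \<Longrightarrow> f (tA n A j (pjoin A a b)) = 0" by auto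
  qed
qed

lemma pf_zero: assumes f: "f \<in> dlhom A" shows "pf f (pzero A) = 0"
proof (rule Pp_intro[OF f carr(2)])
  fix j assume j: "1 \<le> j" "j \<le> n"
  have "tA n A j (pzero A) = pzero A" using tr[OF I_zero[OF n1 j] carr(2) carr(2)] by simp
  then show "\<not> j \<le> 0 \<Longrightarrow> f (tA n A j (pzero A)) = 0" using f_props(4)[OF f] by simp
qed auto

lemma pf_one: assumes f: "f \<in> dlhom A" shows "pf f (pone A) = n"
proof (rule Pp_intro[OF f carr(3)])
  fix j assume j: "1 \<le> j" "j \<le> n"
  have "tA n A j (pone A) = pone A" using tr[OF I_one[OF n1 j] carr(3) carr(3)] by simp
  then show "j \<le> n \<Longrightarrow> f (tA n A j (pone A)) = 1" using f_props(5)[OF f] by simp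
qed auto

end

context pmvA begin

definition gI :: "('a \<Rightarrow> real) \<Rightarrow> 'a \<Rightarrow> real" where
  "gI f = restrict (\<lambda>a. real (pf f a) / real n) (pcarrier A)"

lemma gI_hom: assumes f: "f \<in> dlhom A" shows "gI f \<in> hom A (PL n)"
  unfolding hom_def
proof (intro CollectI conjI ballI)
  show "gI f \<in> pcarrier A \<rightarrow>\<^sub>E pcarrier (PL n)"
    unfolding gI_def using pf_le[OF f] by auto
  fix x y assume x: "x \<in> pcarrier A" and y: "y \<in> pcarrier A"
  have c: "pmeet A x y \<in> pcarrier A" "pjoin A x y \<in> pcarrier A" "podot A x y \<in> pcarrier A" "poplus A x y \<in> pcarrier A"
    using carr(1)[OF x y] by auto
  show "gI f (pmeet A x y) = pmeet (PL n) (gI f x) (gI f y)"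
    using c x y by (simp add: gI_def pf_meet[OF f x y] idx_ops[OF n1])
  show "gI f (pjoin A x y) = pjoin (PL n) (gI f x) (gI f y)"
    using c x y by (simp add: gI_def pf_join[OF f x y] idx_ops[OF n1])
  show "gI f (podot A x y) = podot (PL n) (gI f x) (gI f y)"
    using c x y by (simp add: gI_def pf_odot[OF f x y] idx_ops[OF n1])
  show "gI f (poplus A x y) = poplus (PL n) (gI f x) (gI f y)"
    using c x y by (simp add: gI_def pf_oplus[OF f x y] idx_ops[OF n1])
next
  show "gI f (pzero A) = pzero (PL n)" using carr(2) by (simp add: gI_def pf_zero[OF f])
  show "gI f (pone A) = pone (PL n)" using carr(3) n1 by (simp add: gI_def pf_one[OF f])
qed

lemma hom_simps:
  assumes "u \<in> hom A (PL n)"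
  shows "u \<in> pcarrier A \<rightarrow>\<^sub>E pcarrier (PL n)"
    "\<And>x y. x \<in> pcarrier A \<Longrightarrow> y \<in> pcarrier A \<Longrightarrow> u (pmeet A x y) = min (u x) (u y)"
    "\<And>x y. x \<in> pcarrier A \<Longrightarrow> y \<in> pcarrier A \<Longrightarrow> u (pjoin A x y) = max (u x) (u y)"
    "\<And>x y. x \<in> pcarrier A \<Longrightarrow> y \<in> pcarrier A \<Longrightarrow> u (poplus A x y) = min 1 (u x + u y)"
    "u (pzero A) = 0" "u (pone A) = 1"
  using assms unfolding hom_def by auto

lemma skel_sub: "a \<in> skel A \<Longrightarrow> a \<in> pcarrier A" by (simp add: skel_iff)

lemma eta_dlhom: assumes u: "u \<in> hom A (PL n)" shows "eta A u \<in> dlhom A"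
  unfolding dlhom_def
proof (intro CollectI conjI ballI)
  have v: "u s \<in> {0, 1}" if s: "s \<in> skel A" for s
  proof -
    have sc: "s \<in> pcarrier A" and ss: "poplus A s s = s" using s by (auto simp: skel_iff)
    have "u s \<in> pcarrier (PL n)" using hom_simps(1)[OF u] sc by auto
    then have "u s \<ge> 0" by auto
    moreover have "min 1 (u s + u s) = u s" using hom_simps(4)[OF u sc sc] ss by simp
    ultimately show ?thesis by (auto simp: min_def split: if_splits)
  qed
  show "eta A u \<in> skel A \<rightarrow>\<^sub>E {0, 1}" unfolding eta_def using v by auto
  fix x y assume x: "x \<in> skel A" and y: "y \<in> skel A"
  show "eta A u (pmeet A x y) = min (eta A u x) (eta A u y)"
    using skel_meet[OF x y] x y hom_simps(2)[OF u skel_sub[OF x] skel_sub[OF y]] by (simp add: eta_def)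
  show "eta A u (pjoin A x y) = max (eta A u x) (eta A u y)"
    using skel_join[OF x y] x y hom_simps(3)[OF u skel_sub[OF x] skel_sub[OF y]] by (simp add: eta_def)
next
  show "eta A u (pzero A) = 0" using skel_consts hom_simps(5)[OF u] by (simp add: eta_def)
  show "eta A u (pone A) = 1" using skel_consts hom_simps(6)[OF u] by (simp add: eta_def)
qed

lemma u_tA:
  assumes u: "u \<in> hom A (PL n)" and a: "a \<in> pcarrier A" and i: "i \<le> n" "u a = real i / real n"
    and j: "1 \<le> j" "j \<le> n"
  shows "u (tA n A j a) = (if j \<le> i then 1 else 0)"
proof -
  have "u (tA n A j a) = eval (PL n) (u \<circ> (\<lambda>_. a)) (thr n j)"
    unfolding tA_def by (rule hom_eval[OF u _ alg]) (use a in auto)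
  also have "u \<circ> (\<lambda>_. a) = (\<lambda>_. real i / real n)" using i by (simp add: o_def)
  also have "eval (PL n) (\<lambda>_. real i / real n) (thr n j) = (if j \<le> i then 1 else 0)"
    by (rule thr_val[OF n1 j i(1)])
  finally show ?thesis .
qed

lemma g_eta: assumes u: "u \<in> hom A (PL n)" shows "gI (eta A u) = u"
proof
  fix a
  show "gI (eta A u) a = u a"
  proof (cases "a \<in> pcarrier A")
    case a: True
    obtain i where i: "i \<le> n" "u a = real i / real n" using hom_simps(1)[OF u] a by (auto dest!: PiE_mem)
    have "pf (eta A u) a = i"
    proof (rule Pp_intro[OF eta_dlhom[OF u] a i(1)])
      fix j assume j: "1 \<le> j" "j \<le> n"
      have "eta A u (tA n A j a) = (if j \<le> i then 1 else 0)"
        using u_tA[OF u a i j] tA_skel[OF a j] by (simp add: eta_def)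
      then show "j \<le> i \<Longrightarrow> eta A u (tA n A j a) = 1" "\<not> j \<le> i \<Longrightarrow> eta A u (tA n A j a) = 0" by auto
    qed
    then show ?thesis using a i by (simp add: gI_def)
  next
    case False
    then show ?thesis using hom_simps(1)[OF u] by (simp add: gI_def PiE_def extensional_def)
  qed
qed

lemma eta_g: assumes f: "f \<in> dlhom A" shows "eta A (gI f) = f"
proof
  fix a
  show "eta A (gI f) a = f a"
  proof (cases "a \<in> skel A")
    case a: True
    have ac: "a \<in> pcarrier A" using skel_sub[OF a] .
    have ft: "\<And>j. 1 \<le> j \<Longrightarrow> j \<le> n \<Longrightarrow> f (tA n A j a) = f a" using tA_skel_id[OF a] by simp
    have "f a \<in> {0,1}" using f_props(1)[OF f a] .
    then show ?thesis
    proof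
      assume "f a = 0"
      then have "pf f a = 0" using ft by (intro Pp_intro[OF f ac]) auto
      then show ?thesis using a ac \<open>f a = 0\<close> by (simp add: eta_def gI_def)
    next
      assume "f a \<in> {1}"
      then have "pf f a = n" using ft by (intro Pp_intro[OF f ac]) auto
      then show ?thesis using a ac \<open>f a \<in> {1}\<close> n1 by (simp add: eta_def gI_def)
    qed
  next
    case False
    then show ?thesis using f by (simp add: eta_def dlhom_def PiE_def extensional_def)
  qed
qed

lemma order:
  assumes u: "u \<in> hom A (PL n)" and v: "v \<in> hom A (PL n)"
  shows "(\<forall>a\<in>pcarrier A. u a \<le> v a) \<longleftrightarrow> (\<forall>a\<in>skel A. eta A u a \<le> eta A v a)"
proof
  assume "\<forall>a\<in>pcarrier A. u a \<le> v a"
  then show "\<forall>a\<in>skel A. eta A u a \<le> eta A v a" by (auto simp: eta_def skel_iff)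
next
  assume H: "\<forall>a\<in>skel A. eta A u a \<le> eta A v a"
  show "\<forall>a\<in>pcarrier A. u a \<le> v a"
  proof
    fix a assume a: "a \<in> pcarrier A"
    obtain i where i: "i \<le> n" "u a = real i / real n" using hom_simps(1)[OF u] a by (auto dest!: PiE_mem)
    obtain i' where i': "i' \<le> n" "v a = real i' / real n" using hom_simps(1)[OF v] a by (auto dest!: PiE_mem)
    have "i \<le> i'"
    proof (cases "i = 0")
      case False
      then have j: "1 \<le> i" by simp
      have "eta A u (tA n A i a) \<le> eta A v (tA n A i a)" using H tA_skel[OF a j i(1)] by blast
      then have "u (tA n A i a) \<le> v (tA n A i a)" using tA_skel[OF a j i(1)] by (simp add: eta_def)
      then show ?thesis using u_tA[OF u a i j i(1)] u_tA[OF v a i' j i(1)] by (auto split: if_splits)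
    qed simp
    then show "u a \<le> v a" using i i' by (simp add: divide_right_mono)
  qed
qed

end

lemma lc_cont:
  assumes "\<And>x. x \<in> topspace X \<Longrightarrow> h x \<in> S"
    "\<And>x. x \<in> topspace X \<Longrightarrow> \<exists>U. openin X U \<and> x \<in> U \<and> (\<forall>y\<in>U. h y = h x)"
  shows "continuous_map X (discrete_topology S) h"
  unfolding continuous_map_openin_preimage_eq
proof (intro conjI allI impI)
  show "h \<in> topspace X \<rightarrow> topspace (discrete_topology S)" using assms(1) by auto
  fix U assume U: "openin (discrete_topology S) U"
  show "openin X (topspace X \<inter> h -` U)"
  proof (subst openin_subopen, intro ballI)
    fix x assume x: "x \<in> topspace X \<inter> h -` U"
    obtain V where V: "openin X V" "x \<in> V" "\<forall>y\<in>V. h y = h x" using assms(2) x by blast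
    have "V \<subseteq> topspace X \<inter> h -` U"
    proof
      fix y assume y: "y \<in> V"
      have "y \<in> topspace X" using openin_subset[OF V(1)] y by blast
      moreover have "h y \<in> U" using V(3) y x by (metis IntD2 vimageD)
      ultimately show "y \<in> topspace X \<inter> h -` U" by blast
    qed
    then show "\<exists>T. openin X T \<and> x \<in> T \<and> T \<subseteq> topspace X \<inter> h -` U" using V by blast
  qed
qed

lemma natural:
  assumes h: "h \<in> hom A B" and u: "u \<in> hom B (PL n)"
  shows "eta A (Dn_mor A h u) = DS_mor A h (eta B u)"
proof
  fix x
  show "eta A (Dn_mor A h u) x = DS_mor A h (eta B u) x"
  proof (cases "x \<in> skel A")
    case True
    then have xc: "x \<in> pcarrier A" and xx: "poplus A x x = x" by (auto simp: skel_def)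
    have hP: "h \<in> pcarrier A \<rightarrow>\<^sub>E pcarrier B" using h unfolding hom_def by blast
    have "h x \<in> pcarrier B" using PiE_mem[OF hP xc] .
    moreover have "h (poplus A x x) = poplus B (h x) (h x)" using h xc unfolding hom_def by blast
    then have "poplus B (h x) (h x) = h x" using xx by simp
    ultimately have "h x \<in> skel B" by (simp add: skel_def)
    then show ?thesis using True xc by (simp add: eta_def Dn_mor_def DS_mor_def)
  next
    case False
    then show ?thesis by (simp add: eta_def Dn_mor_def DS_mor_def)
  qed
qed

context pmvA begin

lemma top_Dn: "topspace (Dn_top n A) = hom A (PL n)"
  unfolding Dn_top_def by (auto simp: hom_def)

lemma top_D: "topspace (D_top A) = dlhom A"
  unfolding D_top_def by (auto simp: dlhom_def)

lemma pDn: "a \<in> pcarrier A \<Longrightarrow> continuous_map (Dn_top n A) (discrete_topology (pcarrier (PL n))) (\<lambda>v. v a)"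
  unfolding Dn_top_def
  by (rule continuous_map_from_subtopology) (rule continuous_map_product_projection[where X="\<lambda>_. discrete_topology (pcarrier (PL n))"])

lemma pD: "s \<in> skel A \<Longrightarrow> continuous_map (D_top A) (discrete_topology {0, 1}) (\<lambda>f. f s)"
  unfolding D_top_def
  by (rule continuous_map_from_subtopology) (rule continuous_map_product_projection[where X="\<lambda>_. discrete_topology {0::real, 1}"])

lemma cont_eta: "continuous_map (Dn_top n A) (D_top A) (eta A)"
  unfolding D_top_def continuous_map_in_subtopology
proof (intro conjI)
  show "eta A \<in> topspace (Dn_top n A) \<rightarrow> dlhom A" using eta_dlhom by (auto simp: top_Dn)
  show "continuous_map (Dn_top n A) (product_topology (\<lambda>_. discrete_topology {0, 1}) (skel A)) (eta A)"
    unfolding continuous_map_componentwise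
  proof (intro conjI ballI)
    show "eta A ` topspace (Dn_top n A) \<subseteq> extensional (skel A)" by (auto simp: eta_def)
    fix k assume k: "k \<in> skel A"
    show "continuous_map (Dn_top n A) (discrete_topology {0, 1}) (\<lambda>x. eta A x k)"
    proof (rule lc_cont)
      fix u assume u: "u \<in> topspace (Dn_top n A)"
      then have uh: "u \<in> hom A (PL n)" by (simp add: top_Dn)
      show "eta A u k \<in> {0, 1}" using eta_dlhom[OF uh] k by (auto simp: dlhom_def)
      have kc: "k \<in> pcarrier A" using skel_sub[OF k] .
      have ukc: "u k \<in> pcarrier (PL n)" using hom_simps(1)[OF uh] kc by auto
      let ?U = "{v \<in> topspace (Dn_top n A). v k \<in> {u k}}"
      have o1: "openin (Dn_top n A) ?U"
        by (rule openin_continuous_map_preimage[OF pDn[OF kc]]) (use ukc in auto)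
      have o2: "u \<in> ?U" using u by simp
      have o3: "\<forall>v\<in>?U. eta A v k = eta A u k" using k by (simp add: eta_def)
      show "\<exists>U. openin (Dn_top n A) U \<and> u \<in> U \<and> (\<forall>y\<in>U. eta A y k = eta A u k)"
        by (rule exI[of _ ?U], intro conjI o1 o2 o3)
    qed
  qed
qed

lemma cont_g: "continuous_map (D_top A) (Dn_top n A) gI"
  unfolding Dn_top_def continuous_map_in_subtopology
proof (intro conjI)
  show "gI \<in> topspace (D_top A) \<rightarrow> hom A (PL n)" using gI_hom by (auto simp: top_D)
  show "continuous_map (D_top A) (product_topology (\<lambda>_. discrete_topology (pcarrier (PL n))) (pcarrier A)) gI"
    unfolding continuous_map_componentwise
  proof (intro conjI ballI)
    show "gI ` topspace (D_top A) \<subseteq> extensional (pcarrier A)" by (auto simp: gI_def)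
    fix a assume a: "a \<in> pcarrier A"
    show "continuous_map (D_top A) (discrete_topology (pcarrier (PL n))) (\<lambda>x. gI x a)"
    proof (rule lc_cont)
      fix f0 assume f0: "f0 \<in> topspace (D_top A)"
      then have fd: "f0 \<in> dlhom A" by (simp add: top_D)
      show "gI f0 a \<in> pcarrier (PL n)" using a pf_le[OF fd a] by (auto simp: gI_def)
      let ?U = "\<Inter>j\<in>{1..n}. {f \<in> topspace (D_top A). f (tA n A j a) \<in> {f0 (tA n A j a)}}"
      have o1: "openin (D_top A) ?U"
      proof (rule openin_INT2)
        show "finite {1..n}" by simp
        show "{1..n} \<noteq> {}" using n1 by simp
        fix j assume j: "j \<in> {1..n}"
        have sk: "tA n A j a \<in> skel A" using tA_skel[OF a] j by auto
        show "openin (D_top A) {f \<in> topspace (D_top A). f (tA n A j a) \<in> {f0 (tA n A j a)}}"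
          by (rule openin_continuous_map_preimage[OF pD[OF sk]]) (use f_props(1)[OF fd sk] in auto)
      qed
      have o2: "f0 \<in> ?U" using f0 by simp
      have o3: "\<forall>f\<in>?U. gI f a = gI f0 a"
      proof
        fix f assume fU: "f \<in> ?U"
        have "1 \<in> {1..n}" using n1 by simp
        from INT_D[OF fU this] have "f \<in> topspace (D_top A)" by simp
        then have fd': "f \<in> dlhom A" by (simp add: top_D)
        have eqv: "f (tA n A j a) = f0 (tA n A j a)" if "1 \<le> j" "j \<le> n" for j
        proof -
          have "j \<in> {1..n}" using that by simp
          from INT_D[OF fU this] show ?thesis by simp
        qed
        have "pf f a = pf f0 a"
        proof (rule Pp_intro[OF fd' a pf_le[OF fd a]])
          fix j assume j: "1 \<le> j" "j \<le> n"
          show "j \<le> pf f0 a \<Longrightarrow> f (tA n A j a) = 1" "\<not> j \<le> pf f0 a \<Longrightarrow> f (tA n A j a) = 0"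
            using eqv[OF j] fv[OF fd a j] by simp_all
        qed
        then show "gI f a = gI f0 a" using a by (simp add: gI_def)
      qed
      show "\<exists>U. openin (D_top A) U \<and> f0 \<in> U \<and> (\<forall>y\<in>U. gI y a = gI f0 a)"
        by (rule exI[of _ ?U], intro conjI o1 o2 o3)
    qed
  qed
qed

lemma main:
  "bij_betw (eta A) (hom A (PL n)) (dlhom A)"
  "homeomorphic_map (Dn_top n A) (D_top A) (eta A)"
proof -
  show "bij_betw (eta A) (hom A (PL n)) (dlhom A)"
    by (rule bij_betw_byWitness[where f' = gI]) (auto simp: g_eta eta_g eta_dlhom gI_hom)
  show "homeomorphic_map (Dn_top n A) (D_top A) (eta A)"
    unfolding homeomorphic_map_maps homeomorphic_maps_def
    by (intro exI[of _ gI] conjI cont_eta cont_g) (auto simp: top_Dn top_D g_eta eta_g)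
qed

end

theorem theorem4p4:
  fixes n :: nat
  assumes "n \<ge> 1"
  shows
    "(\<forall>A :: 'a pmv_alg. in_PMV n A \<longrightarrow>
        bij_betw (eta A) (hom A (PL n)) (dlhom A) \<and>
        (\<forall>u\<in>hom A (PL n). \<forall>v\<in>hom A (PL n).
           (\<forall>a\<in>pcarrier A. u a \<le> v a) \<longleftrightarrow> (\<forall>a\<in>skel A. eta A u a \<le> eta A v a)) \<and>
        homeomorphic_map (Dn_top n A) (D_top A) (eta A))
   \<and>
    (\<forall>(A :: 'a pmv_alg) (B :: 'b pmv_alg) h. in_PMV n A \<longrightarrow> in_PMV n B \<longrightarrow> h \<in> hom A B \<longrightarrow>
        (\<forall>u\<in>hom B (PL n). eta A (Dn_mor A h u) = DS_mor A h (eta B u)))"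
proof (intro conjI allI impI ballI)
  fix A :: "'a pmv_alg" assume "in_PMV n A"
  then interpret pmvA n A using assms by unfold_locales
  show "bij_betw (eta A) (hom A (PL n)) (dlhom A)" by (rule main(1))
  show "homeomorphic_map (Dn_top n A) (D_top A) (eta A)" by (rule main(2))
  fix u v assume "u \<in> hom A (PL n)" "v \<in> hom A (PL n)"
  then show "(\<forall>a\<in>pcarrier A. u a \<le> v a) \<longleftrightarrow> (\<forall>a\<in>skel A. eta A u a \<le> eta A v a)" by (rule order)
next
  fix A :: "'a pmv_alg" and B :: "'b pmv_alg" and h u
  assume "h \<in> hom A B" "u \<in> hom B (PL n)"
  then show "eta A (Dn_mor A h u) = DS_mor A h (eta B u)" by (rule natural)
qed

end
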